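(* Let $\mathbb{X}=(X,\tau_{\mathbb{X}})$ be a $T_0$ topological space and $\Omega_0$ a viable base of $\mathbb{X}$. Then the spectral compactification $\widehat{\mathbb{X}}_{\Omega_0}$ is a core-compact space, and the map $\iota:X\to\widehat{X}$, $\iota(x)=\{I\in\mathrm{Idl}(\Omega_0): x\in\bigcup I\}$, is a dense topological embedding (continuous, injective, relatively open, with dense image). That is, $\widehat{\mathbb{X}}_{\Omega_0}$ is a core-compactification of $\mathbb{X}$.
   Context: A viable base of $\mathbb{X}$ is a family $\Omega_0\subseteq\tau_{\mathbb{X}}$ closed under finite unions and finite intersections (so $\emptyset,X\in\Omega_0$) which is a base of $\tau_{\mathbb{X}}$. $\mathrm{Idl}(\Omega_0)$ is the set of ideals (nonempty, downward closed, directed subsets) of $(\Omega_0,\subseteq)$, ordered by inclusion; it is a complete lattice. A completely prime filter of a complete lattice $L$ is a nonempty upward closed $F\subseteq L$ closed under binary meets such that whenever $\bigvee A\in F$ for $A\subseteq L$ then $A\cap F\neq\emptyset$. $\widehat{\mathbb{X}}_{\Omega_0}$ is the set $\widehat{X}$ of completely prime filters of $\mathrm{Idl}(\Omega_0)$ with the (hull-kernel) topology whose open sets are exactly $\mathcal{O}_I=\{y\in\widehat{X}: I\in y\}$, $I\in\mathrm{Idl}(\Omega_0)$. A space is core-compact if its lattice of open sets under inclusion is a continuous lattice. A core-compactification of $\mathbb{X}$ is a core-compact space into which $\mathbb{X}$ embeds as a dense subspace. *)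

theory Defs
  imports "HOL-Analysis.Analysis"
begin

definition viable_base :: "'a topology \<Rightarrow> 'a set set \<Rightarrow> bool" where
  "viable_base X \<Omega> \<longleftrightarrow>
     (\<forall>U\<in>\<Omega>. openin X U) \<and> {} \<in> \<Omega> \<and> topspace X \<in> \<Omega> \<and>
     (\<forall>U\<in>\<Omega>. \<forall>V\<in>\<Omega>. U \<union> V \<in> \<Omega> \<and> U \<inter> V \<in> \<Omega>) \<and>
     (\<forall>W. openin X W \<longrightarrow> (\<exists>\<U>. \<U> \<subseteq> \<Omega> \<and> W = \<Union>\<U>))"

definition Idl :: "'a set set \<Rightarrow> 'a set set set" where
  "Idl \<Omega> = {I. I \<subseteq> \<Omega> \<and> I \<noteq> {} \<and>
     (\<forall>U\<in>I. \<forall>V\<in>\<Omega>. V \<subseteq> U \<longrightarrow> V \<in> I) \<and>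
     (\<forall>U\<in>I. \<forall>V\<in>I. \<exists>W\<in>I. U \<subseteq> W \<and> V \<subseteq> W)}"

definition is_lub :: "'b set set \<Rightarrow> 'b set set \<Rightarrow> 'b set \<Rightarrow> bool" where
  "is_lub L A J \<longleftrightarrow> J \<in> L \<and> (\<forall>I\<in>A. I \<subseteq> J) \<and>
     (\<forall>K\<in>L. (\<forall>I\<in>A. I \<subseteq> K) \<longrightarrow> J \<subseteq> K)"

definition is_glb :: "'b set set \<Rightarrow> 'b set set \<Rightarrow> 'b set \<Rightarrow> bool" where
  "is_glb L A J \<longleftrightarrow> J \<in> L \<and> (\<forall>I\<in>A. J \<subseteq> I) \<and>
     (\<forall>K\<in>L. (\<forall>I\<in>A. K \<subseteq> I) \<longrightarrow> K \<subseteq> J)"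

definition completely_prime_filter :: "'b set set \<Rightarrow> 'b set set \<Rightarrow> bool" where
  "completely_prime_filter L F \<longleftrightarrow>
     F \<subseteq> L \<and> F \<noteq> {} \<and>
     (\<forall>I\<in>F. \<forall>J\<in>L. I \<subseteq> J \<longrightarrow> J \<in> F) \<and>
     (\<forall>I\<in>F. \<forall>J\<in>F. \<forall>K. is_glb L {I, J} K \<longrightarrow> K \<in> F) \<and>
     (\<forall>A J. A \<subseteq> L \<longrightarrow> is_lub L A J \<longrightarrow> J \<in> F \<longrightarrow> A \<inter> F \<noteq> {})"

definition spec_points :: "'a set set \<Rightarrow> 'a set set set set" where
  "spec_points \<Omega> = {F. completely_prime_filter (Idl \<Omega>) F}"

definition spec_compactification :: "'a set set \<Rightarrow> 'a set set set topology" where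
  "spec_compactification \<Omega> =
     topology (\<lambda>U. \<exists>I\<in>Idl \<Omega>. U = {y \<in> spec_points \<Omega>. I \<in> y})"

definition iota :: "'a set set \<Rightarrow> 'a \<Rightarrow> 'a set set set" where
  "iota \<Omega> x = {I \<in> Idl \<Omega>. x \<in> \<Union>I}"

definition way_below_open :: "'b topology \<Rightarrow> 'b set \<Rightarrow> 'b set \<Rightarrow> bool" where
  "way_below_open Y U V \<longleftrightarrow>
     (\<forall>\<D>. (\<forall>D\<in>\<D>. openin Y D) \<and> \<D> \<noteq> {} \<and>
           (\<forall>D1\<in>\<D>. \<forall>D2\<in>\<D>. \<exists>D3\<in>\<D>. D1 \<subseteq> D3 \<and> D2 \<subseteq> D3) \<and>
           V \<subseteq> \<Union>\<D> \<longrightarrow> (\<exists>D\<in>\<D>. U \<subseteq> D))"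

definition core_compact :: "'b topology \<Rightarrow> bool" where
  "core_compact Y \<longleftrightarrow>
     (\<forall>V. openin Y V \<longrightarrow> V = \<Union>{U. openin Y U \<and> way_below_open Y U V})"

end

theory Submission
  imports Defs
begin

definition lat :: "'a set set \<Rightarrow> bool" where
  "lat \<Omega> \<longleftrightarrow> {} \<in> \<Omega> \<and> (\<forall>U\<in>\<Omega>. \<forall>V\<in>\<Omega>. U \<union> V \<in> \<Omega> \<and> U \<inter> V \<in> \<Omega>)"

definition Op :: "'a set set \<Rightarrow> 'a set set \<Rightarrow> 'a set set set set" where
  "Op \<Omega> I = {y \<in> spec_points \<Omega>. I \<in> y}"

definition dn :: "'a set set \<Rightarrow> 'a set \<Rightarrow> 'a set set" where
  "dn \<Omega> U = {V\<in>\<Omega>. V \<subseteq> U}"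

definition jn :: "'a set set \<Rightarrow> 'a set set set \<Rightarrow> 'a set set" where
  "jn \<Omega> A = {V\<in>\<Omega>. \<exists>F. finite F \<and> F \<subseteq> \<Union>A \<and> V \<subseteq> \<Union>F}"

lemma lat_finite_Un: assumes "lat \<Omega>" "finite F" "F \<subseteq> \<Omega>" shows "\<Union>F \<in> \<Omega>"
  using assms(2,3) by (induction F rule: finite_induct) (use assms(1) in \<open>simp_all add: lat_def\<close>)

lemma Idl_D: assumes "I \<in> Idl \<Omega>"
  shows "I \<subseteq> \<Omega>" "I \<noteq> {}" "\<And>U V. U \<in> I \<Longrightarrow> V \<in> \<Omega> \<Longrightarrow> V \<subseteq> U \<Longrightarrow> V \<in> I"
    "\<And>U V. U \<in> I \<Longrightarrow> V \<in> I \<Longrightarrow> \<exists>W\<in>I. U \<subseteq> W \<and> V \<subseteq> W"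
proof -
  have h: "I \<subseteq> \<Omega> \<and> I \<noteq> {} \<and>
     (\<forall>U\<in>I. \<forall>V\<in>\<Omega>. V \<subseteq> U \<longrightarrow> V \<in> I) \<and>
     (\<forall>U\<in>I. \<forall>V\<in>I. \<exists>W\<in>I. U \<subseteq> W \<and> V \<subseteq> W)" using assms unfolding Idl_def by simp
  then show "I \<subseteq> \<Omega>" by (rule conjunct1)
  from h show "I \<noteq> {}" by (elim conjE)
  from h show "\<And>U V. U \<in> I \<Longrightarrow> V \<in> \<Omega> \<Longrightarrow> V \<subseteq> U \<Longrightarrow> V \<in> I" by (simp only: Ball_def)
  from h show "\<And>U V. U \<in> I \<Longrightarrow> V \<in> I \<Longrightarrow> \<exists>W\<in>I. U \<subseteq> W \<and> V \<subseteq> W" by (simp only: Ball_def)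
qed

lemma Idl_empty: assumes "lat \<Omega>" "I \<in> Idl \<Omega>" shows "{} \<in> I"
proof -
  obtain U where "U \<in> I" using Idl_D(2)[OF assms(2)] by blast
  then show ?thesis using Idl_D(3)[OF assms(2) \<open>U \<in> I\<close>, of "{}"] assms(1) by (simp add: lat_def)
qed

lemma Idl_Un: assumes "lat \<Omega>" "I \<in> Idl \<Omega>" "U \<in> I" "V \<in> I" shows "U \<union> V \<in> I"
proof -
  obtain W where "W \<in> I" "U \<subseteq> W" "V \<subseteq> W" using Idl_D(4)[OF assms(2,3,4)] by blast
  moreover have "U \<union> V \<in> \<Omega>" using assms Idl_D(1)[OF assms(2)] by (auto simp: lat_def)
  ultimately show ?thesis using Idl_D(3)[OF assms(2)] by blast
qed

lemma Idl_finite_Un: assumes "lat \<Omega>" "I \<in> Idl \<Omega>" "finite F" "F \<subseteq> I" shows "\<Union>F \<in> I"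
  using assms(3,4) by (induction F rule: finite_induct) (simp_all add: Idl_empty[OF assms(1,2)] Idl_Un[OF assms(1,2)])

lemma Idl_I:
  assumes "I \<subseteq> \<Omega>" "I \<noteq> {}" "\<And>U V. U \<in> I \<Longrightarrow> V \<in> \<Omega> \<Longrightarrow> V \<subseteq> U \<Longrightarrow> V \<in> I"
    "\<And>U V. U \<in> I \<Longrightarrow> V \<in> I \<Longrightarrow> \<exists>W\<in>I. U \<subseteq> W \<and> V \<subseteq> W"
  shows "I \<in> Idl \<Omega>"
  unfolding Idl_def using assms by simp

lemma lat_D: assumes "lat \<Omega>" shows "{} \<in> \<Omega>" "\<And>U V. U \<in> \<Omega> \<Longrightarrow> V \<in> \<Omega> \<Longrightarrow> U \<union> V \<in> \<Omega>"
  "\<And>U V. U \<in> \<Omega> \<Longrightarrow> V \<in> \<Omega> \<Longrightarrow> U \<inter> V \<in> \<Omega>"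
  using assms unfolding lat_def by simp_all

lemma Omega_Idl: assumes "lat \<Omega>" shows "\<Omega> \<in> Idl \<Omega>"
proof (rule Idl_I)
  show "\<exists>W\<in>\<Omega>. U \<subseteq> W \<and> V \<subseteq> W" if "U \<in> \<Omega>" "V \<in> \<Omega>" for U V
    using lat_D(2)[OF assms that] by blast
qed (use lat_D(1)[OF assms] in auto)

lemma dn_Idl: assumes "lat \<Omega>" "U \<in> \<Omega>" shows "dn \<Omega> U \<in> Idl \<Omega>"
proof (rule Idl_I)
  show "\<exists>W\<in>dn \<Omega> U. V \<subseteq> W \<and> V' \<subseteq> W" if "V \<in> dn \<Omega> U" "V' \<in> dn \<Omega> U" for V V'
    using that lat_D(2)[OF assms(1), of V V'] unfolding dn_def by blast
  show "dn \<Omega> U \<noteq> {}" using lat_D(1)[OF assms(1)] unfolding dn_def by blast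
qed (auto simp: dn_def)

lemma Int_Idl: assumes "lat \<Omega>" "I \<in> Idl \<Omega>" "J \<in> Idl \<Omega>" shows "I \<inter> J \<in> Idl \<Omega>"
proof (rule Idl_I)
  show "I \<inter> J \<noteq> {}" using Idl_empty[OF assms(1,2)] Idl_empty[OF assms(1,3)] by blast
  show "\<exists>W\<in>I \<inter> J. U \<subseteq> W \<and> V \<subseteq> W" if "U \<in> I \<inter> J" "V \<in> I \<inter> J" for U V
    using Idl_Un[OF assms(1,2), of U V] Idl_Un[OF assms(1,3), of U V] that by blast
  show "I \<inter> J \<subseteq> \<Omega>" using Idl_D(1)[OF assms(2)] by blast
  show "V \<in> I \<inter> J" if "U \<in> I \<inter> J" "V \<in> \<Omega>" "V \<subseteq> U" for U V
    using Idl_D(3)[OF assms(2), of U V] Idl_D(3)[OF assms(3), of U V] that by blast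
qed

lemma Int_glb: "lat \<Omega> \<Longrightarrow> I \<in> Idl \<Omega> \<Longrightarrow> J \<in> Idl \<Omega> \<Longrightarrow> is_glb (Idl \<Omega>) {I, J} (I \<inter> J)"
  unfolding is_glb_def using Int_Idl by blast

lemma jn_I: "V \<in> \<Omega> \<Longrightarrow> finite F \<Longrightarrow> F \<subseteq> \<Union>A \<Longrightarrow> V \<subseteq> \<Union>F \<Longrightarrow> V \<in> jn \<Omega> A"
  unfolding jn_def by blast

lemma jn_E: assumes "V \<in> jn \<Omega> A"
  obtains F where "V \<in> \<Omega>" "finite F" "F \<subseteq> \<Union>A" "V \<subseteq> \<Union>F"
  using assms unfolding jn_def by blast

lemma jn_Idl: assumes "lat \<Omega>" "A \<subseteq> Idl \<Omega>" shows "jn \<Omega> A \<in> Idl \<Omega>"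
proof (rule Idl_I)
  have "{} \<in> jn \<Omega> A" by (rule jn_I[OF lat_D(1)[OF assms(1)], of "{}"]) simp_all
  then show "jn \<Omega> A \<noteq> {}" by blast
  show "jn \<Omega> A \<subseteq> \<Omega>" by (rule subsetI, erule jn_E)
  show "V \<in> jn \<Omega> A" if h: "U \<in> jn \<Omega> A" "V \<in> \<Omega>" "V \<subseteq> U" for U V
  proof -
    obtain F where "U \<in> \<Omega>" "finite F" "F \<subseteq> \<Union>A" "U \<subseteq> \<Union>F" using h(1) by (rule jn_E)
    then show ?thesis using jn_I[OF h(2)] h(3) by (meson order_trans)
  qed
  show "\<exists>W\<in>jn \<Omega> A. U \<subseteq> W \<and> V \<subseteq> W" if h: "U \<in> jn \<Omega> A" "V \<in> jn \<Omega> A" for U V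
  proof -
    obtain F where F: "U \<in> \<Omega>" "finite F" "F \<subseteq> \<Union>A" "U \<subseteq> \<Union>F" using h(1) by (rule jn_E)
    obtain G where G: "V \<in> \<Omega>" "finite G" "G \<subseteq> \<Union>A" "V \<subseteq> \<Union>G" using h(2) by (rule jn_E)
    have "U \<union> V \<in> jn \<Omega> A"
      by (rule jn_I[OF lat_D(2)[OF assms(1) F(1) G(1)], of "F \<union> G"]) (use F G in auto)
    then show ?thesis by (intro bexI[of _ "U \<union> V"]) auto
  qed
qed

lemma jn_upper: assumes "lat \<Omega>" "A \<subseteq> Idl \<Omega>" "I \<in> A" shows "I \<subseteq> jn \<Omega> A"
proof
  fix U assume U: "U \<in> I"
  then have "U \<in> \<Omega>" using Idl_D(1)[of I \<Omega>] assms by blast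
  moreover have "finite {U} \<and> {U} \<subseteq> \<Union>A \<and> U \<subseteq> \<Union>{U}" using U assms(3) by blast
  ultimately show "U \<in> jn \<Omega> A" by (intro jn_I[of U \<Omega> "{U}"]) auto
qed

lemma jn_least: assumes "lat \<Omega>" "K \<in> Idl \<Omega>" "\<And>I. I \<in> A \<Longrightarrow> I \<subseteq> K" shows "jn \<Omega> A \<subseteq> K"
proof
  fix V assume "V \<in> jn \<Omega> A"
  then have "V \<in> \<Omega>" "\<exists>F. finite F \<and> F \<subseteq> \<Union>A \<and> V \<subseteq> \<Union>F" unfolding jn_def by simp_all
  then obtain F where F: "finite F" "F \<subseteq> \<Union>A" "V \<subseteq> \<Union>F" by blast
  have "F \<subseteq> K"
  proof
    fix x assume "x \<in> F"
    then obtain I where "I \<in> A" "x \<in> I" using F(2) by blast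
    then show "x \<in> K" using assms(3)[of I] by blast
  qed
  then have "\<Union>F \<in> K" using Idl_finite_Un[OF assms(1,2) F(1)] by simp
  then show "V \<in> K" using Idl_D(3)[OF assms(2) _ \<open>V \<in> \<Omega>\<close> F(3)] by simp
qed

lemma jn_lub: "lat \<Omega> \<Longrightarrow> A \<subseteq> Idl \<Omega> \<Longrightarrow> is_lub (Idl \<Omega>) A (jn \<Omega> A)"
  unfolding is_lub_def
proof (intro conjI ballI impI)
  assume "lat \<Omega>" "A \<subseteq> Idl \<Omega>"
  then show "jn \<Omega> A \<in> Idl \<Omega>" by (rule jn_Idl)
  show "I \<subseteq> jn \<Omega> A" if "I \<in> A" for I by (rule jn_upper[OF \<open>lat \<Omega>\<close> \<open>A \<subseteq> Idl \<Omega>\<close> that])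
  show "jn \<Omega> A \<subseteq> K" if "K \<in> Idl \<Omega>" "\<forall>I\<in>A. I \<subseteq> K" for K
    using jn_least[OF \<open>lat \<Omega>\<close> that(1)] that(2) by blast
qed

lemma cpf_D:
  assumes "y \<in> spec_points \<Omega>"
  shows "y \<subseteq> Idl \<Omega>" "y \<noteq> {}" "\<And>I J. I \<in> y \<Longrightarrow> J \<in> Idl \<Omega> \<Longrightarrow> I \<subseteq> J \<Longrightarrow> J \<in> y"
   "\<And>I J K. I \<in> y \<Longrightarrow> J \<in> y \<Longrightarrow> is_glb (Idl \<Omega>) {I, J} K \<Longrightarrow> K \<in> y"
   "\<And>A J. A \<subseteq> Idl \<Omega> \<Longrightarrow> is_lub (Idl \<Omega>) A J \<Longrightarrow> J \<in> y \<Longrightarrow> A \<inter> y \<noteq> {}"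
proof -
  have h: "y \<subseteq> Idl \<Omega> \<and> y \<noteq> {} \<and>
     (\<forall>I\<in>y. \<forall>J\<in>Idl \<Omega>. I \<subseteq> J \<longrightarrow> J \<in> y) \<and>
     (\<forall>I\<in>y. \<forall>J\<in>y. \<forall>K. is_glb (Idl \<Omega>) {I, J} K \<longrightarrow> K \<in> y) \<and>
     (\<forall>A J. A \<subseteq> Idl \<Omega> \<longrightarrow> is_lub (Idl \<Omega>) A J \<longrightarrow> J \<in> y \<longrightarrow> A \<inter> y \<noteq> {})"
    using assms unfolding spec_points_def completely_prime_filter_def mem_Collect_eq .
  note h1 = conjunct1[OF h] and h2 = conjunct1[OF conjunct2[OF h]]
    and h3 = conjunct1[OF conjunct2[OF conjunct2[OF h]]]
    and h4 = conjunct1[OF conjunct2[OF conjunct2[OF conjunct2[OF h]]]]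
    and h5 = conjunct2[OF conjunct2[OF conjunct2[OF conjunct2[OF h]]]]
  show "y \<subseteq> Idl \<Omega>" by (fact h1)
  show "y \<noteq> {}" by (fact h2)
  show "\<And>I J. I \<in> y \<Longrightarrow> J \<in> Idl \<Omega> \<Longrightarrow> I \<subseteq> J \<Longrightarrow> J \<in> y" using h3 by blast
  show "\<And>I J K. I \<in> y \<Longrightarrow> J \<in> y \<Longrightarrow> is_glb (Idl \<Omega>) {I, J} K \<Longrightarrow> K \<in> y" using h4 by blast
  show "\<And>A J. A \<subseteq> Idl \<Omega> \<Longrightarrow> is_lub (Idl \<Omega>) A J \<Longrightarrow> J \<in> y \<Longrightarrow> A \<inter> y \<noteq> {}" using h5 by blast
qed

lemma OpI: "y \<in> spec_points \<Omega> \<Longrightarrow> I \<in> y \<Longrightarrow> y \<in> Op \<Omega> I"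
  unfolding Op_def by simp

lemma OpD: "y \<in> Op \<Omega> I \<Longrightarrow> y \<in> spec_points \<Omega>" "y \<in> Op \<Omega> I \<Longrightarrow> I \<in> y"
  unfolding Op_def by simp_all

lemma OO_Int: assumes "lat \<Omega>" "I \<in> Idl \<Omega>" "J \<in> Idl \<Omega>"
  shows "Op \<Omega> I \<inter> Op \<Omega> J = Op \<Omega> (I \<inter> J)"
proof (intro equalityI subsetI)
  fix y assume "y \<in> Op \<Omega> I \<inter> Op \<Omega> J"
  then have y: "y \<in> spec_points \<Omega>" "I \<in> y" "J \<in> y" using OpD by blast+
  show "y \<in> Op \<Omega> (I \<inter> J)"
    by (rule OpI[OF y(1) cpf_D(4)[OF y(1) y(2) y(3) Int_glb[OF assms]]])
next
  fix y assume "y \<in> Op \<Omega> (I \<inter> J)"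
  then have y: "y \<in> spec_points \<Omega>" "I \<inter> J \<in> y" using OpD by blast+
  have "I \<in> y" by (rule cpf_D(3)[OF y(1) y(2) assms(2)]) blast
  moreover have "J \<in> y" by (rule cpf_D(3)[OF y(1) y(2) assms(3)]) blast
  ultimately show "y \<in> Op \<Omega> I \<inter> Op \<Omega> J" using OpI[OF y(1)] by blast
qed

lemma OO_mono: assumes "I \<subseteq> J" "J \<in> Idl \<Omega>" shows "Op \<Omega> I \<subseteq> Op \<Omega> J"
proof
  fix y assume "y \<in> Op \<Omega> I"
  then have y: "y \<in> spec_points \<Omega>" "I \<in> y" using OpD by blast+
  show "y \<in> Op \<Omega> J" by (rule OpI[OF y(1) cpf_D(3)[OF y(1) y(2) assms(2,1)]])
qed

lemma OO_jn: assumes "lat \<Omega>" "A \<subseteq> Idl \<Omega>"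
  shows "Op \<Omega> (jn \<Omega> A) = \<Union>(Op \<Omega> ` A)"
proof (intro equalityI subsetI)
  fix y assume "y \<in> Op \<Omega> (jn \<Omega> A)"
  then have y: "y \<in> spec_points \<Omega>" "jn \<Omega> A \<in> y" using OpD by blast+
  have "A \<inter> y \<noteq> {}" by (rule cpf_D(5)[OF y(1) assms(2) jn_lub[OF assms] y(2)])
  then obtain I where "I \<in> A" "I \<in> y" by blast
  then show "y \<in> \<Union>(Op \<Omega> ` A)" using OpI[OF y(1)] by blast
next
  fix y assume "y \<in> \<Union>(Op \<Omega> ` A)"
  then obtain I where I: "I \<in> A" "y \<in> Op \<Omega> I" by blast
  show "y \<in> Op \<Omega> (jn \<Omega> A)"
    by (rule subsetD[OF OO_mono[OF jn_upper[OF assms I(1)] jn_Idl[OF assms]] I(2)])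
qed

lemma OO_Omega: assumes "lat \<Omega>" shows "Op \<Omega> \<Omega> = spec_points \<Omega>"
proof (intro equalityI subsetI)
  fix y assume "y \<in> Op \<Omega> \<Omega>" then show "y \<in> spec_points \<Omega>" by (rule OpD)
next
  fix y assume y: "y \<in> spec_points \<Omega>"
  then obtain I where "I \<in> y" using cpf_D(2) by blast
  moreover have "I \<subseteq> \<Omega>" using Idl_D(1) cpf_D(1)[OF y] \<open>I \<in> y\<close> by blast
  ultimately show "y \<in> Op \<Omega> \<Omega>" using OpI[OF y cpf_D(3)[OF y _ Omega_Idl[OF assms]]] by blast
qed

lemma istop: assumes "lat \<Omega>" shows "istopology (\<lambda>U. \<exists>I\<in>Idl \<Omega>. U = Op \<Omega> I)"
  unfolding istopology_def
proof (intro conjI allI impI)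
  fix S T assume "\<exists>I\<in>Idl \<Omega>. S = Op \<Omega> I" "\<exists>I\<in>Idl \<Omega>. T = Op \<Omega> I"
  then obtain I J where "I \<in> Idl \<Omega>" "J \<in> Idl \<Omega>" "S = Op \<Omega> I" "T = Op \<Omega> J" by blast
  then show "\<exists>I\<in>Idl \<Omega>. S \<inter> T = Op \<Omega> I"
    using OO_Int[OF assms] Int_Idl[OF assms] by blast
next
  fix K assume K: "\<forall>S\<in>K. \<exists>I\<in>Idl \<Omega>. S = Op \<Omega> I"
  define A where "A = {I \<in> Idl \<Omega>. Op \<Omega> I \<in> K}"
  have A: "A \<subseteq> Idl \<Omega>" unfolding A_def by blast
  have "\<Union>K = \<Union>(Op \<Omega> ` A)"
  proof (intro equalityI subsetI)
    fix y assume "y \<in> \<Union>K"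
    then obtain S where "S \<in> K" "y \<in> S" by blast
    then obtain I where "I \<in> Idl \<Omega>" "S = Op \<Omega> I" using K by blast
    then show "y \<in> \<Union>(Op \<Omega> ` A)" using \<open>S \<in> K\<close> \<open>y \<in> S\<close> unfolding A_def by blast
  next
    fix y assume "y \<in> \<Union>(Op \<Omega> ` A)"
    then show "y \<in> \<Union>K" unfolding A_def by blast
  qed
  then have "\<Union>K = Op \<Omega> (jn \<Omega> A)" using OO_jn[OF assms A] by simp
  then show "\<exists>I\<in>Idl \<Omega>. \<Union>K = Op \<Omega> I"
    using jn_Idl[OF assms A] by blast
qed

lemma spec_eq: "spec_compactification \<Omega> = topology (\<lambda>U. \<exists>I\<in>Idl \<Omega>. U = Op \<Omega> I)"
  unfolding spec_compactification_def Op_def ..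

lemma openin_spec: assumes "lat \<Omega>"
  shows "openin (spec_compactification \<Omega>) U \<longleftrightarrow> (\<exists>I\<in>Idl \<Omega>. U = Op \<Omega> I)"
  unfolding spec_eq topology_inverse'[OF istop[OF assms]] ..

lemma topspace_spec: assumes L: "lat \<Omega>" shows "topspace (spec_compactification \<Omega>) = spec_points \<Omega>"
proof (intro equalityI subsetI)
  fix y assume "y \<in> topspace (spec_compactification \<Omega>)"
  then obtain U where "openin (spec_compactification \<Omega>) U" "y \<in> U" unfolding topspace_def by blast
  then show "y \<in> spec_points \<Omega>" unfolding openin_spec[OF L] using OpD by blast
next
  fix y assume "y \<in> spec_points \<Omega>"
  moreover have "openin (spec_compactification \<Omega>) (spec_points \<Omega>)"
    unfolding openin_spec[OF L] using OO_Omega[OF L] Omega_Idl[OF L] by metis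
  ultimately show "y \<in> topspace (spec_compactification \<Omega>)" using openin_subset by blast
qed

lemma chain_Idl:
  assumes L: "lat \<Omega>" and C: "C \<subseteq> Idl \<Omega>" "C \<noteq> {}" and ch: "\<forall>A\<in>C. \<forall>B\<in>C. A \<subseteq> B \<or> B \<subseteq> A"
  shows "\<Union>C \<in> Idl \<Omega>"
proof (rule Idl_I)
  show "\<Union>C \<subseteq> \<Omega>" using C(1) Idl_D(1) by blast
  obtain K where K: "K \<in> C" using C(2) by blast
  then have "{} \<in> K" using Idl_empty[OF L] C(1) by blast
  then show "\<Union>C \<noteq> {}" using K by blast
  show "V \<in> \<Union>C" if h: "U \<in> \<Union>C" "V \<in> \<Omega>" "V \<subseteq> U" for U V
  proof -
    obtain K where "K \<in> C" "U \<in> K" using h(1) by blast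
    then have "V \<in> K" using Idl_D(3)[of K \<Omega> U V] C(1) h by blast
    then show ?thesis using \<open>K \<in> C\<close> by blast
  qed
  show "\<exists>W\<in>\<Union>C. U \<subseteq> W \<and> V \<subseteq> W" if h: "U \<in> \<Union>C" "V \<in> \<Union>C" for U V
  proof -
    obtain K1 where K1: "K1 \<in> C" "U \<in> K1" using h(1) by blast
    obtain K2 where K2: "K2 \<in> C" "V \<in> K2" using h(2) by blast
    have "K1 \<subseteq> K2 \<or> K2 \<subseteq> K1" using ch K1(1) K2(1) by blast
    then obtain K where K: "K \<in> C" "U \<in> K" "V \<in> K"
    proof
      assume "K1 \<subseteq> K2" then show thesis using that[of K2] K1 K2 by blast
    next
      assume "K2 \<subseteq> K1" then show thesis using that[of K1] K1 K2 by blast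
    qed
    have KI: "K \<in> Idl \<Omega>" using C(1) K(1) by blast
    obtain W where "W \<in> K" "U \<subseteq> W" "V \<subseteq> W" using Idl_D(4)[OF KI K(2) K(3)] by blast
    then show ?thesis using K(1) by blast
  qed
qed

lemma max_ideal_exists:
  assumes L: "lat \<Omega>" and J: "J \<in> Idl \<Omega>" and U: "U \<notin> J"
  shows "\<exists>M\<in>{K \<in> Idl \<Omega>. J \<subseteq> K \<and> U \<notin> K}. \<forall>X\<in>{K \<in> Idl \<Omega>. J \<subseteq> K \<and> U \<notin> K}. M \<subseteq> X \<longrightarrow> X = M"
proof (rule Zorn_Lemma2, rule ballI)
  fix C assume "C \<in> chains {K \<in> Idl \<Omega>. J \<subseteq> K \<and> U \<notin> K}"
  then have C: "C \<subseteq> {K \<in> Idl \<Omega>. J \<subseteq> K \<and> U \<notin> K}" and ch: "\<forall>A\<in>C. \<forall>B\<in>C. A \<subseteq> B \<or> B \<subseteq> A"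
    unfolding chains_def chain_subset_def by blast+
  show "\<exists>M\<in>{K \<in> Idl \<Omega>. J \<subseteq> K \<and> U \<notin> K}. \<forall>X\<in>C. X \<subseteq> M"
  proof (cases "C = {}")
    case True
    then show ?thesis using J U by blast
  next
    case False
    have "\<Union>C \<in> Idl \<Omega>" using chain_Idl[OF L _ False ch] C by blast
    moreover have "J \<subseteq> \<Union>C" using False C by blast
    moreover have "U \<notin> \<Union>C" using C by blast
    ultimately show ?thesis by blast
  qed
qed

lemma sep:
  assumes L: "lat \<Omega>" and J: "J \<in> Idl \<Omega>" and U: "U \<in> \<Omega>" "U \<notin> J"
  shows "\<exists>y\<in>spec_points \<Omega>. dn \<Omega> U \<in> y \<and> J \<notin> y"
proof -
  obtain M where M0: "M \<in> {K \<in> Idl \<Omega>. J \<subseteq> K \<and> U \<notin> K}"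
    and mx0: "\<forall>X\<in>{K \<in> Idl \<Omega>. J \<subseteq> K \<and> U \<notin> K}. M \<subseteq> X \<longrightarrow> X = M"
    using max_ideal_exists[OF L J U(2)] by (rule bexE)
  from M0 have M: "M \<in> Idl \<Omega>" "J \<subseteq> M" "U \<notin> M" by simp_all
  have mx: "X = M" if "X \<in> Idl \<Omega>" "J \<subseteq> X" "U \<notin> X" "M \<subseteq> X" for X
    using mx0 that by simp
  have ext: "\<exists>m\<in>M. U \<subseteq> A \<union> m" if A: "A \<in> \<Omega>" "A \<notin> M" for A
  proof -
    define KA where "KA = {V\<in>\<Omega>. \<exists>m\<in>M. V \<subseteq> A \<union> m}"
    have "{} \<in> M" by (rule Idl_empty[OF L M(1)])
    have KA: "KA \<in> Idl \<Omega>"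
    proof (rule Idl_I)
      show "KA \<subseteq> \<Omega>" unfolding KA_def by blast
      show "KA \<noteq> {}" using \<open>{} \<in> M\<close> lat_D(1)[OF L] unfolding KA_def by blast
      show "V \<in> KA" if h: "W \<in> KA" "V \<in> \<Omega>" "V \<subseteq> W" for W V
        using h unfolding KA_def by blast
      show "\<exists>W\<in>KA. V1 \<subseteq> W \<and> V2 \<subseteq> W" if h: "V1 \<in> KA" "V2 \<in> KA" for V1 V2
      proof -
        obtain m1 where m1: "m1 \<in> M" "V1 \<subseteq> A \<union> m1" "V1 \<in> \<Omega>" using h(1) unfolding KA_def by blast
        obtain m2 where m2: "m2 \<in> M" "V2 \<subseteq> A \<union> m2" "V2 \<in> \<Omega>" using h(2) unfolding KA_def by blast
        have "m1 \<union> m2 \<in> M" by (rule Idl_Un[OF L M(1) m1(1) m2(1)])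
        moreover have "V1 \<union> V2 \<in> \<Omega>" by (rule lat_D(2)[OF L m1(3) m2(3)])
        moreover have "V1 \<union> V2 \<subseteq> A \<union> (m1 \<union> m2)" using m1 m2 by blast
        ultimately have "V1 \<union> V2 \<in> KA" unfolding KA_def by blast
        then show ?thesis by blast
      qed
    qed
    have "M \<subseteq> KA"
    proof
      fix V assume "V \<in> M"
      then have "V \<in> \<Omega>" using Idl_D(1)[OF M(1)] by blast
      then show "V \<in> KA" using \<open>V \<in> M\<close> unfolding KA_def by blast
    qed
    have "A \<in> KA" using A(1) \<open>{} \<in> M\<close> unfolding KA_def by blast
    then have "KA \<noteq> M" using A(2) by blast
    then have "U \<in> KA" using mx[OF KA] M(2) \<open>M \<subseteq> KA\<close> by blast
    then show ?thesis unfolding KA_def by blast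
  qed
  have prime: "A \<in> M \<or> B \<in> M" if AB: "A \<in> \<Omega>" "B \<in> \<Omega>" "A \<inter> B \<in> M" for A B
  proof (rule ccontr)
    assume "\<not> (A \<in> M \<or> B \<in> M)"
    then obtain m1 m2 where m: "m1 \<in> M" "U \<subseteq> A \<union> m1" "m2 \<in> M" "U \<subseteq> B \<union> m2"
      using ext AB by meson
    have "(A \<inter> B) \<union> m1 \<in> M" by (rule Idl_Un[OF L M(1) AB(3) m(1)])
    then have W: "(A \<inter> B) \<union> m1 \<union> m2 \<in> M" by (rule Idl_Un[OF L M(1) _ m(3)])
    have "U \<subseteq> (A \<inter> B) \<union> m1 \<union> m2" using m by blast
    then have "U \<in> M" using Idl_D(3)[OF M(1) W U(1)] by blast
    then show False using M(3) by blast
  qed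
  define y where "y = {K \<in> Idl \<Omega>. \<not> K \<subseteq> M}"
  have "completely_prime_filter (Idl \<Omega>) y"
    unfolding completely_prime_filter_def
  proof (intro conjI allI impI ballI)
    show "y \<subseteq> Idl \<Omega>" unfolding y_def by blast
    have "\<Omega> \<in> y" using Omega_Idl[OF L] U M(3) unfolding y_def by blast
    then show "y \<noteq> {}" by blast
    show "K' \<in> y" if "K \<in> y" "K' \<in> Idl \<Omega>" "K \<subseteq> K'" for K K'
      using that unfolding y_def by blast
    show "K \<in> y" if h: "K1 \<in> y" "K2 \<in> y" "is_glb (Idl \<Omega>) {K1, K2} K" for K1 K2 K
    proof -
      obtain A where A: "A \<in> K1" "A \<notin> M" using h(1) unfolding y_def by blast
      obtain B where B: "B \<in> K2" "B \<notin> M" using h(2) unfolding y_def by blast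
      have K1: "K1 \<in> Idl \<Omega>" and K2: "K2 \<in> Idl \<Omega>" using h unfolding y_def by blast+
      have AO: "A \<in> \<Omega>" using Idl_D(1)[OF K1] A by blast
      have BO: "B \<in> \<Omega>" using Idl_D(1)[OF K2] B by blast
      have ABO: "A \<inter> B \<in> \<Omega>" by (rule lat_D(3)[OF L AO BO])
      have "A \<inter> B \<in> K1" using Idl_D(3)[OF K1 A(1) ABO] by blast
      moreover have "A \<inter> B \<in> K2" using Idl_D(3)[OF K2 B(1) ABO] by blast
      moreover have "K1 \<inter> K2 \<subseteq> K" using h(3) Int_Idl[OF L K1 K2] unfolding is_glb_def by blast
      ultimately have "A \<inter> B \<in> K" by blast
      moreover have "A \<inter> B \<notin> M" using prime[OF AO BO] A B by blast
      moreover have "K \<in> Idl \<Omega>" using h(3) unfolding is_glb_def by blast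
      ultimately show ?thesis unfolding y_def by blast
    qed
    show "A \<inter> y \<noteq> {}" if h: "A \<subseteq> Idl \<Omega>" "is_lub (Idl \<Omega>) A K" "K \<in> y" for A K
    proof
      assume "A \<inter> y = {}"
      then have "\<forall>I\<in>A. I \<subseteq> M" using h(1) unfolding y_def by blast
      then have "K \<subseteq> M" using h(2) M(1) unfolding is_lub_def by blast
      then show False using h(3) unfolding y_def by blast
    qed
  qed
  then have "y \<in> spec_points \<Omega>" unfolding spec_points_def by blast
  moreover have "dn \<Omega> U \<in> y"
  proof -
    have "U \<in> dn \<Omega> U" using U(1) unfolding dn_def by blast
    then show ?thesis using dn_Idl[OF L U(1)] M(3) unfolding y_def by blast
  qed
  moreover have "J \<notin> y" using M(2) unfolding y_def by blast
  ultimately show ?thesis by blast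
qed

lemma compact_dn: assumes L: "lat \<Omega>" and J: "J \<in> Idl \<Omega>" and U: "U \<in> \<Omega>"
  and sub: "Op \<Omega> (dn \<Omega> U) \<subseteq> Op \<Omega> J" shows "U \<in> J"
proof (rule ccontr)
  assume "U \<notin> J"
  then obtain y where y: "y \<in> spec_points \<Omega>" "dn \<Omega> U \<in> y" "J \<notin> y" using sep[OF L J U] by blast
  then have "y \<in> Op \<Omega> J" using sub OpI by blast
  then show False using y(3) OpD by blast
qed

lemma dn_Idl2: assumes "lat \<Omega>" shows "dn \<Omega> W \<in> Idl \<Omega>"
proof (rule Idl_I)
  show "\<exists>W'\<in>dn \<Omega> W. V \<subseteq> W' \<and> V' \<subseteq> W'" if h: "V \<in> dn \<Omega> W" "V' \<in> dn \<Omega> W" for V V'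
  proof -
    have "V \<union> V' \<in> dn \<Omega> W" using h lat_D(2)[OF assms, of V V'] unfolding dn_def by blast
    then show ?thesis by blast
  qed
  show "dn \<Omega> W \<noteq> {}" using lat_D(1)[OF assms] unfolding dn_def by blast
qed (auto simp: dn_def)

lemma fin_dir:
  assumes "finite S" "S \<subseteq> D" "D \<noteq> {}" "\<forall>D1\<in>D. \<forall>D2\<in>D. \<exists>D3\<in>D. D1 \<subseteq> D3 \<and> D2 \<subseteq> D3"
  shows "\<exists>E\<in>D. \<forall>s\<in>S. s \<subseteq> E"
  using assms(1,2)
proof (induction S rule: finite_induct)
  case empty
  then show ?case using assms(3) by blast
next
  case (insert x S)
  then obtain E where E: "E \<in> D" "\<forall>s\<in>S. s \<subseteq> E" by blast
  have "x \<in> D" using insert.prems by blast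
  then obtain E' where "E' \<in> D" "x \<subseteq> E'" "E \<subseteq> E'" using assms(4) E(1) by blast
  then show ?case using E(2) by blast
qed

lemma vb_lat: "viable_base X \<Omega> \<Longrightarrow> lat \<Omega>"
  unfolding viable_base_def lat_def by simp

lemma vb_D: assumes "viable_base X \<Omega>"
  shows "\<And>U. U \<in> \<Omega> \<Longrightarrow> openin X U" "topspace X \<in> \<Omega>"
    "\<And>W. openin X W \<Longrightarrow> \<exists>\<U>. \<U> \<subseteq> \<Omega> \<and> W = \<Union>\<U>"
  using assms unfolding viable_base_def by simp_all

lemma Idl_sub_top: assumes "viable_base X \<Omega>" "I \<in> Idl \<Omega>" shows "\<Union>I \<subseteq> topspace X"
proof
  fix x assume "x \<in> \<Union>I"
  then obtain U where "U \<in> I" "x \<in> U" by blast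
  then have "openin X U" using vb_D(1)[OF assms(1)] Idl_D(1)[OF assms(2)] by blast
  then show "x \<in> topspace X" using openin_subset \<open>x \<in> U\<close> by blast
qed

lemma iota_spec: assumes vb: "viable_base X \<Omega>" and x: "x \<in> topspace X"
  shows "iota \<Omega> x \<in> spec_points \<Omega>"
proof -
  have L: "lat \<Omega>" by (rule vb_lat[OF vb])
  have "completely_prime_filter (Idl \<Omega>) (iota \<Omega> x)"
    unfolding completely_prime_filter_def
  proof (intro conjI allI impI ballI)
    show "iota \<Omega> x \<subseteq> Idl \<Omega>" unfolding iota_def by blast
    have "x \<in> \<Union>\<Omega>" using vb_D(2)[OF vb] x by blast
    then have "\<Omega> \<in> iota \<Omega> x" using Omega_Idl[OF L] unfolding iota_def by blast
    then show "iota \<Omega> x \<noteq> {}" by blast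
    show "J \<in> iota \<Omega> x" if "I \<in> iota \<Omega> x" "J \<in> Idl \<Omega>" "I \<subseteq> J" for I J
      using that unfolding iota_def by blast
    show "K \<in> iota \<Omega> x" if h: "I \<in> iota \<Omega> x" "J \<in> iota \<Omega> x" "is_glb (Idl \<Omega>) {I, J} K" for I J K
    proof -
      have I: "I \<in> Idl \<Omega>" "x \<in> \<Union>I" and J: "J \<in> Idl \<Omega>" "x \<in> \<Union>J" using h(1,2) unfolding iota_def by blast+
      obtain U where U: "U \<in> I" "x \<in> U" using I(2) by blast
      obtain V where V: "V \<in> J" "x \<in> V" using J(2) by blast
      have UO: "U \<in> \<Omega>" using Idl_D(1)[OF I(1)] U(1) by blast
      have VO: "V \<in> \<Omega>" using Idl_D(1)[OF J(1)] V(1) by blast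
      have UV: "U \<inter> V \<in> \<Omega>" by (rule lat_D(3)[OF L UO VO])
      have "U \<inter> V \<in> I" using Idl_D(3)[OF I(1) U(1) UV] by blast
      moreover have "U \<inter> V \<in> J" using Idl_D(3)[OF J(1) V(1) UV] by blast
      moreover have "I \<inter> J \<subseteq> K" using h(3) Int_Idl[OF L I(1) J(1)] unfolding is_glb_def by blast
      ultimately have "U \<inter> V \<in> K" by blast
      moreover have "K \<in> Idl \<Omega>" using h(3) unfolding is_glb_def by blast
      ultimately show ?thesis using U(2) V(2) unfolding iota_def by blast
    qed
    show "A \<inter> iota \<Omega> x \<noteq> {}" if h: "A \<subseteq> Idl \<Omega>" "is_lub (Idl \<Omega>) A K" "K \<in> iota \<Omega> x" for A K
    proof -
      have "K \<subseteq> jn \<Omega> A" using h(2) jn_Idl[OF L h(1)] jn_upper[OF L h(1)] unfolding is_lub_def by blast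
      moreover obtain V where V: "V \<in> K" "x \<in> V" using h(3) unfolding iota_def by blast
      ultimately have "V \<in> jn \<Omega> A" by blast
      then obtain F where F: "finite F" "F \<subseteq> \<Union>A" "V \<subseteq> \<Union>F" by (rule jn_E)
      then obtain f where f: "f \<in> F" "x \<in> f" using V(2) by blast
      then obtain I where I: "I \<in> A" "f \<in> I" using F(2) by blast
      then have "I \<in> iota \<Omega> x" using h(1) f(2) unfolding iota_def by blast
      then show ?thesis using I(1) by blast
    qed
  qed
  then show ?thesis unfolding spec_points_def by blast
qed

lemma iota_Op: assumes "x \<in> topspace X" "viable_base X \<Omega>" "I \<in> Idl \<Omega>"
  shows "iota \<Omega> x \<in> Op \<Omega> I \<longleftrightarrow> x \<in> \<Union>I"
  using iota_spec[OF assms(2,1)] assms(3) unfolding Op_def iota_def by blast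

lemma dn_Union: assumes "viable_base X \<Omega>" "openin X W" shows "\<Union>(dn \<Omega> W) = W"
proof -
  obtain \<U> where "\<U> \<subseteq> \<Omega>" "W = \<Union>\<U>" using vb_D(3)[OF assms] by blast
  then show ?thesis unfolding dn_def by blast
qed

lemma wb_sub: assumes "openin Y V" "way_below_open Y U V" shows "U \<subseteq> V"
proof -
  have w: "\<forall>\<D>. (\<forall>D\<in>\<D>. openin Y D) \<and> \<D> \<noteq> {} \<and>
           (\<forall>D1\<in>\<D>. \<forall>D2\<in>\<D>. \<exists>D3\<in>\<D>. D1 \<subseteq> D3 \<and> D2 \<subseteq> D3) \<and>
           V \<subseteq> \<Union>\<D> \<longrightarrow> (\<exists>D\<in>\<D>. U \<subseteq> D)" using assms(2) unfolding way_below_open_def .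
  have h: "(\<forall>D\<in>{V}. openin Y D) \<and> {V} \<noteq> {} \<and>
           (\<forall>D1\<in>{V}. \<forall>D2\<in>{V}. \<exists>D3\<in>{V}. D1 \<subseteq> D3 \<and> D2 \<subseteq> D3) \<and>
           V \<subseteq> \<Union>{V}" using assms(1) by simp
  have "\<exists>D\<in>{V}. U \<subseteq> D" by (rule mp[OF spec[OF w, of "{V}"] h])
  then show ?thesis by blast
qed

lemma Union_opens: assumes L: "lat \<Omega>" and D: "\<forall>E\<in>\<D>. openin (spec_compactification \<Omega>) E"
  shows "\<Union>\<D> = Op \<Omega> (jn \<Omega> {K \<in> Idl \<Omega>. Op \<Omega> K \<in> \<D>})"
proof -
  define A where "A = {K \<in> Idl \<Omega>. Op \<Omega> K \<in> \<D>}"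
  have A: "A \<subseteq> Idl \<Omega>" unfolding A_def by blast
  have "\<Union>\<D> = \<Union>(Op \<Omega> ` A)"
  proof (intro equalityI subsetI)
    fix y assume "y \<in> \<Union>\<D>"
    then obtain S where "S \<in> \<D>" "y \<in> S" by blast
    then obtain I where "I \<in> Idl \<Omega>" "S = Op \<Omega> I" using D openin_spec[OF L] by blast
    then show "y \<in> \<Union>(Op \<Omega> ` A)" using \<open>S \<in> \<D>\<close> \<open>y \<in> S\<close> unfolding A_def by blast
  next
    fix y assume "y \<in> \<Union>(Op \<Omega> ` A)"
    then show "y \<in> \<Union>\<D>" unfolding A_def by blast
  qed
  then show ?thesis using OO_jn[OF L A] unfolding A_def by simp
qed

lemma wb_dn: assumes L: "lat \<Omega>" and I: "I \<in> Idl \<Omega>" and U: "U \<in> I"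
  shows "way_below_open (spec_compactification \<Omega>) (Op \<Omega> (dn \<Omega> U)) (Op \<Omega> I)"
  unfolding way_below_open_def
proof (intro allI impI, elim conjE)
  fix \<D> assume D: "\<forall>D\<in>\<D>. openin (spec_compactification \<Omega>) D" "\<D> \<noteq> {}"
    "\<forall>D1\<in>\<D>. \<forall>D2\<in>\<D>. \<exists>D3\<in>\<D>. D1 \<subseteq> D3 \<and> D2 \<subseteq> D3" "Op \<Omega> I \<subseteq> \<Union>\<D>"
  define A where "A = {K \<in> Idl \<Omega>. Op \<Omega> K \<in> \<D>}"
  have A: "A \<subseteq> Idl \<Omega>" unfolding A_def by blast
  have UO: "U \<in> \<Omega>" using Idl_D(1)[OF I] U by blast
  have "dn \<Omega> U \<subseteq> I" using Idl_D(3)[OF I U] unfolding dn_def by blast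
  then have "Op \<Omega> (dn \<Omega> U) \<subseteq> Op \<Omega> I" by (rule OO_mono[OF _ I])
  also have "\<dots> \<subseteq> Op \<Omega> (jn \<Omega> A)" using D(4) Union_opens[OF L D(1)] unfolding A_def by simp
  finally have "U \<in> jn \<Omega> A" by (rule compact_dn[OF L jn_Idl[OF L A] UO])
  then obtain F where F: "finite F" "F \<subseteq> \<Union>A" "U \<subseteq> \<Union>F" by (rule jn_E)
  have "\<forall>f\<in>F. \<exists>K. K \<in> A \<and> f \<in> K" using F(2) by blast
  from bchoice[OF this] obtain K where K0: "\<forall>f\<in>F. K f \<in> A \<and> f \<in> K f" ..
  have K: "K f \<in> A" "f \<in> K f" if "f \<in> F" for f using K0 that by simp_all
  have KA: "K ` F \<subseteq> A" using K(1) by blast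
  have sub: "Op \<Omega> ` K ` F \<subseteq> \<D>" using KA unfolding A_def by blast
  have fin: "finite (Op \<Omega> ` K ` F)" using F(1) by simp
  obtain E where E: "E \<in> \<D>" "\<forall>s\<in>Op \<Omega> ` K ` F. s \<subseteq> E"
    using fin_dir[OF fin sub D(2) D(3)] by (rule bexE)
  have KI: "K ` F \<subseteq> Idl \<Omega>" using KA A by blast
  have "U \<in> jn \<Omega> (K ` F)"
  proof (rule jn_I[OF UO F(1) _ F(3)])
    show "F \<subseteq> \<Union>(K ` F)" using K(2) by blast
  qed
  then have "dn \<Omega> U \<subseteq> jn \<Omega> (K ` F)"
    using Idl_D(3)[OF jn_Idl[OF L KI]] unfolding dn_def by blast
  then have "Op \<Omega> (dn \<Omega> U) \<subseteq> Op \<Omega> (jn \<Omega> (K ` F))" by (rule OO_mono[OF _ jn_Idl[OF L KI]])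
  also have "\<dots> = \<Union>(Op \<Omega> ` K ` F)" by (rule OO_jn[OF L KI])
  also have "\<dots> \<subseteq> E" using E(2) by blast
  finally show "\<exists>D\<in>\<D>. Op \<Omega> (dn \<Omega> U) \<subseteq> D" using E(1) by blast
qed

lemma core: assumes L: "lat \<Omega>" shows "core_compact (spec_compactification \<Omega>)"
  unfolding core_compact_def
proof (intro allI impI)
  fix V assume V: "openin (spec_compactification \<Omega>) V"
  then obtain I where I: "I \<in> Idl \<Omega>" "V = Op \<Omega> I" using openin_spec[OF L] by blast
  show "V = \<Union>{U. openin (spec_compactification \<Omega>) U \<and> way_below_open (spec_compactification \<Omega>) U V}"
  proof (intro equalityI subsetI)
    fix y assume "y \<in> \<Union>{U. openin (spec_compactification \<Omega>) U \<and> way_below_open (spec_compactification \<Omega>) U V}"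
    then show "y \<in> V" using wb_sub[OF V] by blast
  next
    fix y assume y: "y \<in> V"
    have DI: "dn \<Omega> ` I \<subseteq> Idl \<Omega>" using dn_Idl2[OF L] by blast
    have "I \<subseteq> jn \<Omega> (dn \<Omega> ` I)"
    proof
      fix U assume "U \<in> I"
      then have "U \<in> dn \<Omega> U" "U \<in> \<Omega>" using Idl_D(1)[OF I(1)] unfolding dn_def by blast+
      then show "U \<in> jn \<Omega> (dn \<Omega> ` I)" using jn_upper[OF L DI] \<open>U \<in> I\<close> by blast
    qed
    then have "Op \<Omega> I \<subseteq> Op \<Omega> (jn \<Omega> (dn \<Omega> ` I))" by (rule OO_mono[OF _ jn_Idl[OF L DI]])
    also have "\<dots> = \<Union>(Op \<Omega> ` dn \<Omega> ` I)" by (rule OO_jn[OF L DI])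
    finally obtain U where U: "U \<in> I" "y \<in> Op \<Omega> (dn \<Omega> U)" using y I(2) by blast
    have "openin (spec_compactification \<Omega>) (Op \<Omega> (dn \<Omega> U))"
      using openin_spec[OF L] dn_Idl2[OF L] by blast
    moreover have "way_below_open (spec_compactification \<Omega>) (Op \<Omega> (dn \<Omega> U)) V"
      using wb_dn[OF L I(1) U(1)] I(2) by simp
    ultimately show "y \<in> \<Union>{U. openin (spec_compactification \<Omega>) U \<and> way_below_open (spec_compactification \<Omega>) U V}"
      using U(2) by blast
  qed
qed

lemma iota_inj: assumes t0: "t0_space X" and vb: "viable_base X \<Omega>"
  shows "inj_on (iota \<Omega>) (topspace X)"
proof (rule inj_onI, rule ccontr)
  fix x y assume x: "x \<in> topspace X" and y: "y \<in> topspace X" and eq: "iota \<Omega> x = iota \<Omega> y" and ne: "x \<noteq> y"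
  have L: "lat \<Omega>" by (rule vb_lat[OF vb])
  obtain W where W: "openin X W" "x \<notin> W \<longleftrightarrow> y \<in> W" using t0 x y ne unfolding t0_space_def by blast
  have WU: "\<Union>(dn \<Omega> W) = W" by (rule dn_Union[OF vb W(1)])
  have "x \<in> \<Union>(dn \<Omega> W) \<longleftrightarrow> y \<in> \<Union>(dn \<Omega> W)"
    using eq iota_Op[OF x vb dn_Idl2[OF L]] iota_Op[OF y vb dn_Idl2[OF L]] by simp
  then show False using W(2) WU by simp
qed

lemma iota_cont: assumes vb: "viable_base X \<Omega>"
  shows "continuous_map X (spec_compactification \<Omega>) (iota \<Omega>)"
  unfolding continuous_map
proof (intro conjI allI impI)
  have L: "lat \<Omega>" by (rule vb_lat[OF vb])
  show "iota \<Omega> ` topspace X \<subseteq> topspace (spec_compactification \<Omega>)"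
    using iota_spec[OF vb] topspace_spec[OF L] by blast
  fix V assume "openin (spec_compactification \<Omega>) V"
  then obtain I where I: "I \<in> Idl \<Omega>" "V = Op \<Omega> I" using openin_spec[OF L] by blast
  have "{x \<in> topspace X. iota \<Omega> x \<in> V} = \<Union>I"
    using iota_Op[OF _ vb I(1)] I(2) Idl_sub_top[OF vb I(1)] by blast
  moreover have "openin X (\<Union>I)"
    using vb_D(1)[OF vb] Idl_D(1)[OF I(1)] by (intro openin_Union) blast
  ultimately show "openin X {x \<in> topspace X. iota \<Omega> x \<in> V}" by simp
qed

lemma iota_open: assumes vb: "viable_base X \<Omega>"
  shows "open_map X (subtopology (spec_compactification \<Omega>) (iota \<Omega> ` topspace X)) (iota \<Omega>)"
  unfolding open_map_def
proof (intro allI impI)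
  have L: "lat \<Omega>" by (rule vb_lat[OF vb])
  fix W assume W: "openin X W"
  have WU: "\<Union>(dn \<Omega> W) = W" by (rule dn_Union[OF vb W])
  have WT: "W \<subseteq> topspace X" using openin_subset[OF W] .
  have "iota \<Omega> ` W = Op \<Omega> (dn \<Omega> W) \<inter> iota \<Omega> ` topspace X"
  proof (intro equalityI subsetI)
    fix z assume "z \<in> iota \<Omega> ` W"
    then obtain x where x: "x \<in> W" "z = iota \<Omega> x" by blast
    then have "x \<in> topspace X" using WT by blast
    then show "z \<in> Op \<Omega> (dn \<Omega> W) \<inter> iota \<Omega> ` topspace X"
      using iota_Op[OF _ vb dn_Idl2[OF L]] x WU by blast
  next
    fix z assume "z \<in> Op \<Omega> (dn \<Omega> W) \<inter> iota \<Omega> ` topspace X"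
    then obtain x where x: "x \<in> topspace X" "z = iota \<Omega> x" "iota \<Omega> x \<in> Op \<Omega> (dn \<Omega> W)" by blast
    then have "x \<in> W" using iota_Op[OF x(1) vb dn_Idl2[OF L]] WU by simp
    then show "z \<in> iota \<Omega> ` W" using x(2) by blast
  qed
  moreover have "openin (spec_compactification \<Omega>) (Op \<Omega> (dn \<Omega> W))"
    using openin_spec[OF L] dn_Idl2[OF L] by blast
  ultimately show "openin (subtopology (spec_compactification \<Omega>) (iota \<Omega> ` topspace X)) (iota \<Omega> ` W)"
    unfolding openin_subtopology by blast
qed

lemma iota_dense: assumes vb: "viable_base X \<Omega>"
  shows "(spec_compactification \<Omega>) closure_of (iota \<Omega> ` topspace X) = topspace (spec_compactification \<Omega>)"
  unfolding dense_intersects_open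
proof (intro allI impI, elim conjE)
  have L: "lat \<Omega>" by (rule vb_lat[OF vb])
  fix T assume T: "openin (spec_compactification \<Omega>) T" "T \<noteq> {}"
  then obtain I where I: "I \<in> Idl \<Omega>" "T = Op \<Omega> I" using openin_spec[OF L] by blast
  obtain y where y: "y \<in> Op \<Omega> I" using T(2) I(2) by blast
  have "\<exists>U\<in>I. U \<noteq> {}"
  proof (rule ccontr)
    assume "\<not> (\<exists>U\<in>I. U \<noteq> {})"
    then have I0: "\<forall>U\<in>I. U = {}" by blast
    have "I \<subseteq> K" if K: "K \<in> Idl \<Omega>" for K
    proof
      fix U assume "U \<in> I"
      then have "U = {}" using I0 by blast
      then show "U \<in> K" using Idl_empty[OF L K] by simp
    qed
    then have lub: "is_lub (Idl \<Omega>) {} I"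
      unfolding is_lub_def using I(1) by blast
    have "{} \<inter> y \<noteq> {}" by (rule cpf_D(5)[OF OpD(1)[OF y] empty_subsetI lub OpD(2)[OF y]])
    then show False by simp
  qed
  then obtain U x where "U \<in> I" "x \<in> U" by blast
  then have x: "x \<in> \<Union>I" by blast
  then have "x \<in> topspace X" using Idl_sub_top[OF vb I(1)] by blast
  then have "iota \<Omega> x \<in> iota \<Omega> ` topspace X \<inter> T" using iota_Op[OF _ vb I(1)] x I(2) by blast
  then show "iota \<Omega> ` topspace X \<inter> T \<noteq> {}" by blast
qed

theorem mainTheorem15:
  fixes X :: "'a topology" and \<Omega> :: "'a set set"
  assumes "t0_space X" and "viable_base X \<Omega>"
  shows "core_compact (spec_compactification \<Omega>)
    \<and> iota \<Omega> ` topspace X \<subseteq> topspace (spec_compactification \<Omega>)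
    \<and> embedding_map X (spec_compactification \<Omega>) (iota \<Omega>)
    \<and> (spec_compactification \<Omega>) closure_of (iota \<Omega> ` topspace X)
        = topspace (spec_compactification \<Omega>)"
proof (intro conjI)
  have L: "lat \<Omega>" by (rule vb_lat[OF assms(2)])
  show "core_compact (spec_compactification \<Omega>)" by (rule core[OF L])
  show "iota \<Omega> ` topspace X \<subseteq> topspace (spec_compactification \<Omega>)"
    using iota_cont[OF assms(2)] unfolding continuous_map by blast
  have "continuous_map X (subtopology (spec_compactification \<Omega>) (iota \<Omega> ` topspace X)) (iota \<Omega>)"
    unfolding continuous_map_in_subtopology using iota_cont[OF assms(2)] by blast
  then have "embedding_map X (subtopology (spec_compactification \<Omega>) (iota \<Omega> ` topspace X)) (iota \<Omega>)"
    by (rule injective_open_imp_embedding_map[OF _ iota_open[OF assms(2)] iota_inj[OF assms]])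
  then show "embedding_map X (spec_compactification \<Omega>) (iota \<Omega>)"
    unfolding embedding_map_in_subtopology by blast
  show "(spec_compactification \<Omega>) closure_of (iota \<Omega> ` topspace X) = topspace (spec_compactification \<Omega>)"
    by (rule iota_dense[OF assms(2)])
qed

end
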